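(* Let $\mathbb{C}$ be a locally small category and $\mathbb{C}_{\mathit{fin}}$ a full subcategory satisfying (C1)–(C5) below. Let $U:\mathbb{C}^*\to\mathbb{C}$ be a reasonable precompact expansion with unique restrictions, and let $F\in\mathrm{Ob}(\mathbb{C})$ be a locally finite object. Then $$\mathrm{Aut}(F)\times U^{-1}(F)\to U^{-1}(F):(g,\mathcal{F})\mapsto\mathcal{F}^g$$ is a continuous group action with respect to the topologies $\tau_F$ on $\mathrm{Aut}(F)$ and $\sigma_F$ on $U^{-1}(F)$.
   Context: Write $A\to B$ if $\hom(A,B)\ne\varnothing$. Conditions: (C1) all morphisms of $\mathbb{C}$ are monomorphisms; (C2) $\mathrm{Ob}(\mathbb{C}_{\mathit{fin}})$ is a set; (C3) $\hom(A,B)$ is finite for $A,B\in\mathrm{Ob}(\mathbb{C}_{\mathit{fin}})$; (C4) for every $F\in\mathrm{Ob}(\mathbb{C})$ there is $A\in\mathrm{Ob}(\mathbb{C}_{\mathit{fin}})$ with $A\to F$; (C5) for every $B\in\mathrm{Ob}(\mathbb{C}_{\mathit{fin}})$ the set $\{A\in\mathrm{Ob}(\mathbb{C}_{\mathit{fin}}):A\to B\}$ is finite. $F$ is locally finite if for all $A,B\in\mathrm{Ob}(\mathbb{C}_{\mathit{fin}})$, $e\in\hom(A,F)$, $f\in\hom(B,F)$ there exist $D\in\mathrm{Ob}(\mathbb{C}_{\mathit{fin}})$, $r\in\hom(D,F)$, $p\in\hom(A,D)$, $q\in\hom(B,D)$ with $r\cdot p=e$, $r\cdot q=f$, such that for every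 $H\in\mathrm{Ob}(\mathbb{C})$, $r'\in\hom(H,F)$, $p'\in\hom(A,H)$, $q'\in\hom(B,H)$ with $r'\cdot p'=e$, $r'\cdot q'=f$ there is $s\in\hom(D,H)$ with $r'\cdot s=r$, $s\cdot p=p'$, $s\cdot q=q'$. An expansion of $\mathbb{C}$ is a locally small category $\mathbb{C}^*$ with a functor $U:\mathbb{C}^*\to\mathbb{C}$ surjective on objects and injective on hom-sets; we regard $\hom_{\mathbb{C}^*}(\mathcal{A},\mathcal{B})\subseteq\hom_{\mathbb{C}}(U\mathcal{A},U\mathcal{B})$, and $U^{-1}(A)=\{\mathcal{A}:U(\mathcal{A})=A\}$. $U$ is reasonable if for every $e\in\hom(A,B)$ and $\mathcal{A}\in U^{-1}(A)$ there is $\mathcal{B}\in U^{-1}(B)$ with $e\in\hom(\mathcal{A},\mathcal{B})$; it has unique restrictions if for every $\mathcal{B}$ and $e\in\hom(A,U(\mathcal{B}))$ there is exactly one $\mathcal{A}\in U^{-1}(A)$ with $e\in\hom(\mathcal{A},\mathcal{B})$; it is precompact if $U^{-1}(A)$ is a set for every $A$ and finite for $A\in\mathrm{Ob}(\mathbb{C}_{\mathit{fin}})$. For $g\in\mathrm{Aut}(F)$ and $\mathcal{F}\in U^{-1}(F)$, $\mathcal{F}^g$ denotes the unique $\mathcal{F}'\in U^{-1}(F)$ with $g^{-1}\in\hom(\mathcal{F},\mathcal{F}')$ (for a reasonable expansion with unique restrictions such an element exists and is unique). $\tau_F$ is the topology on $\mathrm{Aut}(F)$ generated by the sets $\{f\in\mathrm{Aut}(F):f\cdot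 e_1=e_2\}$, $A\in\mathrm{Ob}(\mathbb{C}_{\mathit{fin}})$, $e_1,e_2\in\hom(A,F)$. $\sigma_F$ is the topology on $U^{-1}(F)$ generated by the sets $N(e,\mathcal{A})=\{\mathcal{F}\in U^{-1}(F):e\in\hom(\mathcal{A},\mathcal{F})\}$ for $\mathcal{A}\in\mathrm{Ob}(\mathbb{C}^* )$ with $U(\mathcal{A})\in\mathrm{Ob}(\mathbb{C}_{\mathit{fin}})$ and $e\in\hom(U(\mathcal{A}),F)$. *)

theory Defs
  imports "HOL-Analysis.Analysis"
begin

record ('o, 'm) cat =
  Ob :: "'o set"
  Arr :: "'m set"
  dom :: "'m \<Rightarrow> 'o"
  cod :: "'m \<Rightarrow> 'o"
  comp :: "'m \<Rightarrow> 'm \<Rightarrow> 'm"   (* comp C g f  =  g \<cdot> f  (first f, then g) *)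
  ident :: "'o \<Rightarrow> 'm"

definition hom :: "('o, 'm) cat \<Rightarrow> 'o \<Rightarrow> 'o \<Rightarrow> 'm set" where
  "hom C A B = {f \<in> Arr C. dom C f = A \<and> cod C f = B}"

definition category :: "('o, 'm) cat \<Rightarrow> bool" where
  "category C \<longleftrightarrow>
     (\<forall>f \<in> Arr C. dom C f \<in> Ob C \<and> cod C f \<in> Ob C) \<and>
     (\<forall>A \<in> Ob C. ident C A \<in> hom C A A) \<and>
     (\<forall>A \<in> Ob C. \<forall>B \<in> Ob C. \<forall>D \<in> Ob C. \<forall>f \<in> hom C A B. \<forall>g \<in> hom C B D.
        comp C g f \<in> hom C A D) \<and>
     (\<forall>f \<in> Arr C. comp C f (ident C (dom C f)) = f \<and> comp C (ident C (cod C f)) f = f) \<and>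
     (\<forall>f \<in> Arr C. \<forall>g \<in> Arr C. \<forall>h \<in> Arr C. dom C g = cod C f \<longrightarrow> dom C h = cod C g \<longrightarrow>
        comp C h (comp C g f) = comp C (comp C h g) f)"

definition mono :: "('o, 'm) cat \<Rightarrow> 'm \<Rightarrow> bool" where
  "mono C f \<longleftrightarrow> f \<in> Arr C \<and>
     (\<forall>g \<in> Arr C. \<forall>h \<in> Arr C. dom C g = dom C h \<longrightarrow> cod C g = dom C f \<longrightarrow> cod C h = dom C f
        \<longrightarrow> comp C f g = comp C f h \<longrightarrow> g = h)"

definition Aut :: "('o, 'm) cat \<Rightarrow> 'o \<Rightarrow> 'm set" where
  "Aut C F = {f \<in> hom C F F. \<exists>g \<in> hom C F F. comp C g f = ident C F \<and> comp C f g = ident C F}"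

definition inv_arr :: "('o, 'm) cat \<Rightarrow> 'm \<Rightarrow> 'm" where
  "inv_arr C f = (THE g. g \<in> hom C (cod C f) (dom C f) \<and>
       comp C g f = ident C (dom C f) \<and> comp C f g = ident C (cod C f))"

section \<open>Conditions (C1)--(C5) on a full subcategory given by its object set Fin\<close>

definition conditions_C1_C5 :: "('o, 'm) cat \<Rightarrow> 'o set \<Rightarrow> bool" where
  "conditions_C1_C5 C Fin \<longleftrightarrow>
     Fin \<subseteq> Ob C \<and>
     (\<forall>f \<in> Arr C. mono C f) \<and>
     (\<forall>A \<in> Fin. \<forall>B \<in> Fin. finite (hom C A B)) \<and>
     (\<forall>F \<in> Ob C. \<exists>A \<in> Fin. hom C A F \<noteq> {}) \<and>
     (\<forall>B \<in> Fin. finite {A \<in> Fin. hom C A B \<noteq> {}})"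

definition locally_finite :: "('o, 'm) cat \<Rightarrow> 'o set \<Rightarrow> 'o \<Rightarrow> bool" where
  "locally_finite C Fin F \<longleftrightarrow>
     (\<forall>A \<in> Fin. \<forall>B \<in> Fin. \<forall>e \<in> hom C A F. \<forall>f \<in> hom C B F.
       \<exists>D \<in> Fin. \<exists>r \<in> hom C D F. \<exists>p \<in> hom C A D. \<exists>q \<in> hom C B D.
         comp C r p = e \<and> comp C r q = f \<and>
         (\<forall>H \<in> Ob C. \<forall>r' \<in> hom C H F. \<forall>p' \<in> hom C A H. \<forall>q' \<in> hom C B H.
            comp C r' p' = e \<and> comp C r' q' = f \<longrightarrow>
            (\<exists>s \<in> hom C D H. comp C r' s = r \<and> comp C s p = p' \<and> comp C s q = q')))"

text \<open>An expansion is given by its object set ObS (objects of type 'p), the functor U on objects,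
  and hom-sets homS X Y, regarded (via the faithful functor U) as subsets of hom C (U X) (U Y);
  composition and identities are those of C.\<close>

definition expansion :: "('o, 'm) cat \<Rightarrow> 'p set \<Rightarrow> ('p \<Rightarrow> 'p \<Rightarrow> 'm set) \<Rightarrow> ('p \<Rightarrow> 'o) \<Rightarrow> bool" where
  "expansion C ObS homS U \<longleftrightarrow>
     U ` ObS = Ob C \<and>
     (\<forall>X \<in> ObS. \<forall>Y \<in> ObS. homS X Y \<subseteq> hom C (U X) (U Y)) \<and>
     (\<forall>X \<in> ObS. ident C (U X) \<in> homS X X) \<and>
     (\<forall>X \<in> ObS. \<forall>Y \<in> ObS. \<forall>Z \<in> ObS. \<forall>f \<in> homS X Y. \<forall>g \<in> homS Y Z. comp C g f \<in> homS X Z)"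

definition fibre :: "'p set \<Rightarrow> ('p \<Rightarrow> 'o) \<Rightarrow> 'o \<Rightarrow> 'p set" where
  "fibre ObS U A = {X \<in> ObS. U X = A}"

definition reasonable :: "('o, 'm) cat \<Rightarrow> 'p set \<Rightarrow> ('p \<Rightarrow> 'p \<Rightarrow> 'm set) \<Rightarrow> ('p \<Rightarrow> 'o) \<Rightarrow> bool" where
  "reasonable C ObS homS U \<longleftrightarrow>
     (\<forall>A \<in> Ob C. \<forall>B \<in> Ob C. \<forall>e \<in> hom C A B. \<forall>X \<in> fibre ObS U A.
        \<exists>Y \<in> fibre ObS U B. e \<in> homS X Y)"

definition unique_restrictions :: "('o, 'm) cat \<Rightarrow> 'p set \<Rightarrow> ('p \<Rightarrow> 'p \<Rightarrow> 'm set) \<Rightarrow> ('p \<Rightarrow> 'o) \<Rightarrow> bool" where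
  "unique_restrictions C ObS homS U \<longleftrightarrow>
     (\<forall>Y \<in> ObS. \<forall>A \<in> Ob C. \<forall>e \<in> hom C A (U Y). \<exists>!X. X \<in> fibre ObS U A \<and> e \<in> homS X Y)"

definition precompact :: "'o set \<Rightarrow> 'p set \<Rightarrow> ('p \<Rightarrow> 'o) \<Rightarrow> bool" where
  "precompact Fin ObS U \<longleftrightarrow> (\<forall>A \<in> Fin. finite (fibre ObS U A))"

definition exp_act :: "('o, 'm) cat \<Rightarrow> 'p set \<Rightarrow> ('p \<Rightarrow> 'p \<Rightarrow> 'm set) \<Rightarrow> ('p \<Rightarrow> 'o) \<Rightarrow> 'o \<Rightarrow> 'p \<Rightarrow> 'm \<Rightarrow> 'p" where
  "exp_act C ObS homS U F X g = (THE X'. X' \<in> fibre ObS U F \<and> inv_arr C g \<in> homS X X')"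

definition tau :: "('o, 'm) cat \<Rightarrow> 'o set \<Rightarrow> 'o \<Rightarrow> 'm topology" where
  "tau C Fin F = topology_generated_by
     (insert (Aut C F) {{f \<in> Aut C F. comp C f e1 = e2} | A e1 e2.
        A \<in> Fin \<and> e1 \<in> hom C A F \<and> e2 \<in> hom C A F})"

definition sigma :: "('o, 'm) cat \<Rightarrow> 'o set \<Rightarrow> 'p set \<Rightarrow> ('p \<Rightarrow> 'p \<Rightarrow> 'm set) \<Rightarrow> ('p \<Rightarrow> 'o) \<Rightarrow> 'o \<Rightarrow> 'p topology" where
  "sigma C Fin ObS homS U F = topology_generated_by
     (insert (fibre ObS U F) {{Y \<in> fibre ObS U F. e \<in> homS X Y} | X e.
        X \<in> ObS \<and> U X \<in> Fin \<and> e \<in> hom C (U X) F})"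

end

theory Submission
  imports Defs
begin

lemma hom_arr: "f \<in> hom C A B \<Longrightarrow> f \<in> Arr C \<and> dom C f = A \<and> cod C f = B"
  by (simp add: hom_def)

lemma cat_comp: "category C \<Longrightarrow> A \<in> Ob C \<Longrightarrow> B \<in> Ob C \<Longrightarrow> D \<in> Ob C \<Longrightarrow>
   f \<in> hom C A B \<Longrightarrow> g \<in> hom C B D \<Longrightarrow> comp C g f \<in> hom C A D"
  unfolding category_def by blast

lemma cat_id: "category C \<Longrightarrow> A \<in> Ob C \<Longrightarrow> ident C A \<in> hom C A A"
  unfolding category_def by blast

lemma cat_idl: "category C \<Longrightarrow> f \<in> hom C A B \<Longrightarrow> comp C (ident C B) f = f"
  unfolding category_def hom_def by auto

lemma cat_idr: "category C \<Longrightarrow> f \<in> hom C A B \<Longrightarrow> comp C f (ident C A) = f"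
  unfolding category_def hom_def by auto

lemma cat_assoc: "category C \<Longrightarrow> f \<in> hom C A B \<Longrightarrow> g \<in> hom C B D \<Longrightarrow> h \<in> hom C D E \<Longrightarrow>
   comp C h (comp C g f) = comp C (comp C h g) f"
  unfolding category_def hom_def by auto

lemma inv_arr_unique:
  assumes C: "category C" and F: "F \<in> Ob C" and g: "g \<in> hom C F F" and k: "k \<in> hom C F F"
    and 1: "comp C k g = ident C F" and 2: "comp C g k = ident C F"
  shows "inv_arr C g = k"
  unfolding inv_arr_def
proof (rule the_equality)
  show "k \<in> hom C (cod C g) (dom C g) \<and> comp C k g = ident C (dom C g) \<and> comp C g k = ident C (cod C g)"
    using g k 1 2 by (simp add: hom_def)
next
  fix h assume h: "h \<in> hom C (cod C g) (dom C g) \<and> comp C h g = ident C (dom C g) \<and> comp C g h = ident C (cod C g)"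
  then have hh: "h \<in> hom C F F" "comp C h g = ident C F" "comp C g h = ident C F" using g by (auto simp: hom_def)
  have "h = comp C h (ident C F)" using cat_idr[OF C hh(1)] by simp
  also have "\<dots> = comp C h (comp C g k)" using 2 by simp
  also have "\<dots> = comp C (comp C h g) k" using cat_assoc[OF C k g hh(1)] by simp
  also have "\<dots> = k" using hh(2) cat_idl[OF C k] by simp
  finally show "h = k" .
qed

lemma inv_Aut:
  assumes C: "category C" and F: "F \<in> Ob C" and g: "g \<in> Aut C F"
  shows "inv_arr C g \<in> hom C F F \<and> comp C (inv_arr C g) g = ident C F \<and> comp C g (inv_arr C g) = ident C F
     \<and> inv_arr C g \<in> Aut C F"
proof -
  obtain k where k: "k \<in> hom C F F" "comp C k g = ident C F" "comp C g k = ident C F" and gh: "g \<in> hom C F F"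
    using g unfolding Aut_def by blast
  have "inv_arr C g = k" by (rule inv_arr_unique[OF C F gh k])
  moreover have "k \<in> Aut C F" unfolding Aut_def using k gh by blast
  ultimately show ?thesis using k by simp
qed

lemma Aut_hom: "g \<in> Aut C F \<Longrightarrow> g \<in> hom C F F" by (simp add: Aut_def)

lemma Aut_comp:
  assumes C: "category C" and F: "F \<in> Ob C" and g: "g \<in> Aut C F" and h: "h \<in> Aut C F"
  shows "comp C g h \<in> Aut C F \<and> inv_arr C (comp C g h) = comp C (inv_arr C h) (inv_arr C g)"
proof -
  note ig = inv_Aut[OF C F g] and ih = inv_Aut[OF C F h]
  have gh: "g \<in> hom C F F" "h \<in> hom C F F" using g h by (auto simp: Aut_def)
  have c: "comp C g h \<in> hom C F F" by (rule cat_comp[OF C F F F gh(2) gh(1)])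
  have k: "comp C (inv_arr C h) (inv_arr C g) \<in> hom C F F" using cat_comp[OF C F F F ig[THEN conjunct1] ih[THEN conjunct1]] .
  have 1: "comp C (comp C (inv_arr C h) (inv_arr C g)) (comp C g h) = ident C F"
  proof -
    have "comp C (comp C (inv_arr C h) (inv_arr C g)) (comp C g h)
        = comp C (inv_arr C h) (comp C (inv_arr C g) (comp C g h))"
      using cat_assoc[OF C c ig[THEN conjunct1] ih[THEN conjunct1]] by simp
    also have "comp C (inv_arr C g) (comp C g h) = comp C (comp C (inv_arr C g) g) h"
      using cat_assoc[OF C gh(2) gh(1) ig[THEN conjunct1]] by simp
    also have "\<dots> = h" using ig cat_idl[OF C gh(2)] by argo
    finally show ?thesis using ih by simp
  qed
  have 2: "comp C (comp C g h) (comp C (inv_arr C h) (inv_arr C g)) = ident C F"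
  proof -
    have "comp C (comp C g h) (comp C (inv_arr C h) (inv_arr C g))
        = comp C g (comp C h (comp C (inv_arr C h) (inv_arr C g)))"
      using cat_assoc[OF C k gh(2) gh(1)] by simp
    also have "comp C h (comp C (inv_arr C h) (inv_arr C g)) = comp C (comp C h (inv_arr C h)) (inv_arr C g)"
      using cat_assoc[OF C ig[THEN conjunct1] ih[THEN conjunct1] gh(2)] by simp
    also have "\<dots> = inv_arr C g" using ih ig cat_idl[OF C, of "inv_arr C g" F F] by simp
    finally show ?thesis using ig by simp
  qed
  have "comp C g h \<in> Aut C F" unfolding Aut_def using c k 1 2 by (intro CollectI conjI bexI)
  moreover have "inv_arr C (comp C g h) = comp C (inv_arr C h) (inv_arr C g)"
    by (rule inv_arr_unique[OF C F c k 1 2])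
  ultimately show ?thesis by simp
qed

lemma inv_ident:
  assumes C: "category C" and F: "F \<in> Ob C"
  shows "inv_arr C (ident C F) = ident C F"
  using inv_arr_unique[OF C F cat_id[OF C F] cat_id[OF C F]] cat_idl[OF C cat_id[OF C F]] by simp

lemma ident_Aut: "category C \<Longrightarrow> F \<in> Ob C \<Longrightarrow> ident C F \<in> Aut C F"
proof -
  assume C: "category C" and F: "F \<in> Ob C"
  have i: "ident C F \<in> hom C F F" by (rule cat_id[OF C F])
  have "comp C (ident C F) (ident C F) = ident C F" by (rule cat_idl[OF C i])
  then show ?thesis unfolding Aut_def using i by (intro CollectI conjI bexI)
qed

lemma expS_sub: "expansion C ObS homS U \<Longrightarrow> X \<in> ObS \<Longrightarrow> Y \<in> ObS \<Longrightarrow> f \<in> homS X Y \<Longrightarrow> f \<in> hom C (U X) (U Y)"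
  unfolding expansion_def by blast

lemma expS_comp: "expansion C ObS homS U \<Longrightarrow> X \<in> ObS \<Longrightarrow> Y \<in> ObS \<Longrightarrow> Z \<in> ObS \<Longrightarrow>
   f \<in> homS X Y \<Longrightarrow> g \<in> homS Y Z \<Longrightarrow> comp C g f \<in> homS X Z"
  unfolding expansion_def by blast

lemma expS_id: "expansion C ObS homS U \<Longrightarrow> X \<in> ObS \<Longrightarrow> ident C (U X) \<in> homS X X"
  unfolding expansion_def by blast

lemma fibreD: "X \<in> fibre ObS U A \<Longrightarrow> X \<in> ObS \<and> U X = A" by (simp add: fibre_def)

lemma URD: "unique_restrictions C ObS homS U \<Longrightarrow> Y \<in> ObS \<Longrightarrow> A \<in> Ob C \<Longrightarrow> e \<in> hom C A (U Y)
   \<Longrightarrow> \<exists>!X. X \<in> fibre ObS U A \<and> e \<in> homS X Y"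
  unfolding unique_restrictions_def by blast

lemma RD: "reasonable C ObS homS U \<Longrightarrow> A \<in> Ob C \<Longrightarrow> B \<in> Ob C \<Longrightarrow> e \<in> hom C A B \<Longrightarrow> X \<in> fibre ObS U A
   \<Longrightarrow> \<exists>Y \<in> fibre ObS U B. e \<in> homS X Y"
  unfolding reasonable_def by blast

lemma back_inv:
  assumes C: "category C" and F: "F \<in> Ob C" and E: "expansion C ObS homS U"
    and UR: "unique_restrictions C ObS homS U"
    and k: "k \<in> Aut C F" and X: "X \<in> fibre ObS U F" and Y: "Y \<in> fibre ObS U F"
    and kXY: "k \<in> homS X Y"
  shows "inv_arr C k \<in> homS Y X"
proof -
  note ik = inv_Aut[OF C F k]
  have XO: "X \<in> ObS" "U X = F" and YO: "Y \<in> ObS" "U Y = F" using X Y by (auto simp: fibre_def)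
  obtain Z where Z: "Z \<in> fibre ObS U F" "inv_arr C k \<in> homS Z X"
  proof -
    have "inv_arr C k \<in> hom C F (U X)" using ik XO by simp
    then show ?thesis using URD[OF UR XO(1) F] that by blast
  qed
  have ZO: "Z \<in> ObS" "U Z = F" using Z by (auto simp: fibre_def)
  have "comp C k (inv_arr C k) \<in> homS Z Y" using expS_comp[OF E ZO(1) XO(1) YO(1) Z(2) kXY] .
  then have 1: "ident C F \<in> homS Z Y" using ik by simp
  have 2: "ident C F \<in> homS Y Y" using expS_id[OF E YO(1)] YO by simp
  have "ident C F \<in> hom C F (U Y)" using cat_id[OF C F] YO by simp
  then have "\<exists>!W. W \<in> fibre ObS U F \<and> ident C F \<in> homS W Y" using URD[OF UR YO(1) F] by blast
  then have "Z = Y" using 1 2 Z(1) Y by blast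
  then show ?thesis using Z by simp
qed

lemma act_uniq:
  assumes C: "category C" and F: "F \<in> Ob C" and E: "expansion C ObS homS U"
    and UR: "unique_restrictions C ObS homS U"
    and k: "k \<in> Aut C F" and X: "X \<in> fibre ObS U F" and Y1: "Y1 \<in> fibre ObS U F" and Y2: "Y2 \<in> fibre ObS U F"
    and 1: "k \<in> homS X Y1" and 2: "k \<in> homS X Y2"
  shows "Y1 = Y2"
proof -
  note ik = inv_Aut[OF C F k]
  have a1: "inv_arr C k \<in> homS Y1 X" by (rule back_inv[OF C F E UR k X Y1 1])
  have a2: "inv_arr C k \<in> homS Y2 X" by (rule back_inv[OF C F E UR k X Y2 2])
  have XO: "X \<in> ObS" "U X = F" using fibreD[OF X] by auto
  have "inv_arr C k \<in> hom C F (U X)" using ik XO by simp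
  then have "\<exists>!W. W \<in> fibre ObS U F \<and> inv_arr C k \<in> homS W X"
    by (rule URD[OF UR XO(1) F])
  then show ?thesis using a1 a2 Y1 Y2 by (metis (no_types, lifting))
qed

lemma act_prop:
  assumes C: "category C" and F: "F \<in> Ob C" and E: "expansion C ObS homS U"
    and R: "reasonable C ObS homS U"
    and UR: "unique_restrictions C ObS homS U"
    and g: "g \<in> Aut C F" and X: "X \<in> fibre ObS U F"
  shows "exp_act C ObS homS U F X g \<in> fibre ObS U F \<and> inv_arr C g \<in> homS X (exp_act C ObS homS U F X g)"
    and "\<And>Y. Y \<in> fibre ObS U F \<Longrightarrow> inv_arr C g \<in> homS X Y \<Longrightarrow> exp_act C ObS homS U F X g = Y"
proof -
  note ig = inv_Aut[OF C F g]
  have igh: "inv_arr C g \<in> hom C F F" using ig by (rule conjunct1)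
  have igA: "inv_arr C g \<in> Aut C F" using ig by (simp only:)
  have "\<exists>Y \<in> fibre ObS U F. inv_arr C g \<in> homS X Y" by (rule RD[OF R F F igh X])
  then obtain Y where Y: "Y \<in> fibre ObS U F" "inv_arr C g \<in> homS X Y" by (rule bexE)
  have u: "Y' = Y" if "Y' \<in> fibre ObS U F" "inv_arr C g \<in> homS X Y'" for Y'
    by (rule act_uniq[OF C F E UR igA X that(1) Y(1) that(2) Y(2)])
  have eq: "exp_act C ObS homS U F X g = Y" unfolding exp_act_def
  proof (rule the_equality)
    show "Y \<in> fibre ObS U F \<and> inv_arr C g \<in> homS X Y" using Y by (rule conjI)
    fix Y' assume "Y' \<in> fibre ObS U F \<and> inv_arr C g \<in> homS X Y'"
    then show "Y' = Y" using u by (elim conjE)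
  qed
  show "exp_act C ObS homS U F X g \<in> fibre ObS U F \<and> inv_arr C g \<in> homS X (exp_act C ObS homS U F X g)"
    unfolding eq using Y by (rule conjI)
  show "\<And>Y'. Y' \<in> fibre ObS U F \<Longrightarrow> inv_arr C g \<in> homS X Y' \<Longrightarrow> exp_act C ObS homS U F X g = Y'"
    unfolding eq using u by (rule sym)
qed

theorem proposition5p9:
  fixes C :: "('o, 'm) cat" and Fin :: "'o set"
    and ObS :: "'p set" and homS :: "'p \<Rightarrow> 'p \<Rightarrow> 'm set" and U :: "'p \<Rightarrow> 'o"
    and F :: 'o
  assumes "category C"
    and "conditions_C1_C5 C Fin"
    and "expansion C ObS homS U"
    and "reasonable C ObS homS U"
    and "precompact Fin ObS U"
    and "unique_restrictions C ObS homS U"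
    and "F \<in> Ob C"
    and "locally_finite C Fin F"
  shows "(\<forall>g \<in> Aut C F. \<forall>X \<in> fibre ObS U F. exp_act C ObS homS U F X g \<in> fibre ObS U F)
    \<and> (\<forall>X \<in> fibre ObS U F. exp_act C ObS homS U F X (ident C F) = X)
    \<and> (\<forall>g \<in> Aut C F. \<forall>h \<in> Aut C F. \<forall>X \<in> fibre ObS U F.
         exp_act C ObS homS U F (exp_act C ObS homS U F X g) h = exp_act C ObS homS U F X (comp C g h))
    \<and> continuous_map (prod_topology (tau C Fin F) (sigma C Fin ObS homS U F)) (sigma C Fin ObS homS U F)
         (\<lambda>(g, X). exp_act C ObS homS U F X g)"
proof -
  note C = assms(1) and E = assms(3) and R = assms(4) and UR = assms(6) and F = assms(7)
  have C5: "Fin \<subseteq> Ob C" using assms(2) by (simp add: conditions_C1_C5_def)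
  let ?a = "exp_act C ObS homS U F"
  note AP = act_prop[OF C F E R UR]
  have P1: "\<forall>g \<in> Aut C F. \<forall>X \<in> fibre ObS U F. ?a X g \<in> fibre ObS U F" using AP(1) by blast
  have P2: "\<forall>X \<in> fibre ObS U F. ?a X (ident C F) = X"
  proof
    fix X assume X: "X \<in> fibre ObS U F"
    have "ident C F \<in> homS X X" using expS_id[OF E] X by (auto simp: fibre_def)
    then show "?a X (ident C F) = X" using AP(2)[OF ident_Aut[OF C F] X X] inv_ident[OF C F] by simp
  qed
  have P3: "\<forall>g \<in> Aut C F. \<forall>h \<in> Aut C F. \<forall>X \<in> fibre ObS U F. ?a (?a X g) h = ?a X (comp C g h)"
  proof (intro ballI)
    fix g h X assume g: "g \<in> Aut C F" and h: "h \<in> Aut C F" and X: "X \<in> fibre ObS U F"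
    note A1 = AP(1)[OF g X]
    note A2 = AP(1)[OF h A1[THEN conjunct1]]
    note gh = Aut_comp[OF C F g h]
    have "comp C (inv_arr C h) (inv_arr C g) \<in> homS X (?a (?a X g) h)"
      using expS_comp[OF E fibreD[OF X, THEN conjunct1] fibreD[OF A1[THEN conjunct1], THEN conjunct1]
          fibreD[OF A2[THEN conjunct1], THEN conjunct1] A1[THEN conjunct2] A2[THEN conjunct2]] .
    then show "?a (?a X g) h = ?a X (comp C g h)"
      using AP(2)[OF gh[THEN conjunct1] X A2[THEN conjunct1]] gh by simp
  qed
  define PT where "PT = prod_topology (tau C Fin F) (sigma C Fin ObS homS U F)"
  have tsT: "topspace (tau C Fin F) = Aut C F" unfolding tau_def by auto
  have tsS: "topspace (sigma C Fin ObS homS U F) = fibre ObS U F" unfolding sigma_def by auto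
  have tsP: "topspace PT = Aut C F \<times> fibre ObS U F"
    using tsT tsS unfolding PT_def by simp
  have P4: "continuous_map (PT) (sigma C Fin ObS homS U F)
         (\<lambda>(g, X). ?a X g)"
    unfolding sigma_def
  proof (rule continuous_on_generated_topo)
    show "(\<lambda>(g, X). ?a X g) ` topspace (PT)
        \<subseteq> \<Union> (insert (fibre ObS U F) {{Y \<in> fibre ObS U F. e \<in> homS X Y} |X e.
                X \<in> ObS \<and> U X \<in> Fin \<and> e \<in> hom C (U X) F})"
      using tsP P1 by auto
    fix V assume V: "V \<in> insert (fibre ObS U F) {{Y \<in> fibre ObS U F. e \<in> homS X Y} |X e.
                X \<in> ObS \<and> U X \<in> Fin \<and> e \<in> hom C (U X) F}"
    show "openin (PT)
        ((\<lambda>(g, X). ?a X g) -` V \<inter> topspace (PT))"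
    proof (cases "V = fibre ObS U F")
      case True
      then have "(\<lambda>(g, X). ?a X g) -` V \<inter> topspace (PT)
          = topspace (PT)" using tsP P1 by auto
      then show ?thesis by simp
    next
      case False
      then obtain A e where V: "V = {Y \<in> fibre ObS U F. e \<in> homS A Y}" and A: "A \<in> ObS" "U A \<in> Fin"
        and e: "e \<in> hom C (U A) F" using V by blast
      have UA: "U A \<in> Ob C" using A C5 by blast
      define S where "S = {p \<in> Aut C F \<times> fibre ObS U F. e \<in> homS A (?a (snd p) (fst p))}"
      have Seq: "(\<lambda>(g, X). ?a X g) -` V \<inter> topspace PT = S" unfolding S_def tsP V using P1 by auto
      have "openin (prod_topology (tau C Fin F) (sigma C Fin ObS homS U F)) S"
        unfolding openin_prod_topology_alt
      proof (intro allI impI)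
        fix g0 X0 assume "(g0, X0) \<in> S"
        then have g0: "g0 \<in> Aut C F" and X0: "X0 \<in> fibre ObS U F" and inV: "e \<in> homS A (?a X0 g0)"
          unfolding S_def by auto
        note A0 = AP(1)[OF g0 X0]
        have b: "inv_arr C (inv_arr C g0) \<in> homS (?a X0 g0) X0"
          using back_inv[OF C F E UR _ X0 A0[THEN conjunct1] A0[THEN conjunct2]] inv_Aut[OF C F g0] by simp
        have ii: "inv_arr C (inv_arr C g0) = g0"
          using inv_arr_unique[OF C F _ Aut_hom[OF g0]] inv_Aut[OF C F g0] by simp
        have ge: "comp C g0 e \<in> homS A X0"
          using expS_comp[OF E A(1) fibreD[OF A0[THEN conjunct1], THEN conjunct1] fibreD[OF X0, THEN conjunct1] inV] b ii by simp
        have gehom: "comp C g0 e \<in> hom C (U A) F" using cat_comp[OF C UA F F e Aut_hom[OF g0]] .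
        define U1 where "U1 = {f \<in> Aut C F. comp C f e = comp C g0 e}"
        define V1 where "V1 = {Y \<in> fibre ObS U F. comp C g0 e \<in> homS A Y}"
        show "\<exists>U' V'. openin (tau C Fin F) U' \<and> openin (sigma C Fin ObS homS U F) V' \<and> g0 \<in> U' \<and> X0 \<in> V' \<and>
           U' \<times> V' \<subseteq> S"
        proof (intro exI conjI)
          show "openin (tau C Fin F) U1" unfolding tau_def U1_def
            by (rule topology_generated_by_Basis) (use A e gehom in blast)
          show "openin (sigma C Fin ObS homS U F) V1" unfolding sigma_def V1_def
            by (rule topology_generated_by_Basis) (use A gehom in blast)
          show "g0 \<in> U1" using g0 U1_def by simp
          show "X0 \<in> V1" using X0 ge V1_def by simp
          show "U1 \<times> V1 \<subseteq> S"
          proof (clarify)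
            fix g X assume g: "g \<in> U1" and X: "X \<in> V1"
            have gA: "g \<in> Aut C F" and ge': "comp C g e = comp C g0 e" using g U1_def by auto
            have XF: "X \<in> fibre ObS U F" and ge2: "comp C g e \<in> homS A X" using X V1_def ge' by auto
            note A1 = AP(1)[OF gA XF]
            note ig = inv_Aut[OF C F gA]
            have "comp C (inv_arr C g) (comp C g e) \<in> homS A (?a X g)"
              using expS_comp[OF E A(1) fibreD[OF XF, THEN conjunct1] fibreD[OF A1[THEN conjunct1], THEN conjunct1] ge2 A1[THEN conjunct2]] .
            moreover have "comp C (inv_arr C g) (comp C g e) = e"
              using cat_assoc[OF C e Aut_hom[OF gA] ig[THEN conjunct1]] ig cat_idl[OF C e] by simp
            ultimately have "e \<in> homS A (?a X g)" by simp
            then show "(g, X) \<in> S"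
              unfolding S_def using gA XF by simp
          qed
        qed
      qed
      then show ?thesis using Seq unfolding PT_def by simp
    qed
  qed
  show ?thesis using P1 P2 P3 P4 unfolding PT_def by blast
qed

end
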